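(* Let $g_1,\dots,g_t$ be polyexponential functions with bases $L$, let $m_1,\dots,m_t$ be positive integers, and let $S$ be the least common multiple of $m_1,\dots,m_t$. Then the weighted convolution $(g_1\ast\cdots\ast g_t)_{\vec m}$, $\vec m=(m_1,\dots,m_t)$, is a mod-$S$ polyexponential whose bases lie in $\bigcup_{i=1}^tL^{S/m_i}$, where $L^{S/m_i}=\{\ell^{S/m_i}:\ell\in L\}$.
   Context: A function on nonnegative integers is polyexponential with bases $L$ (finite subset of $\mathbb C$) if it equals $\sum_{\ell\in L}p_\ell(k)\ell^k$ with polynomials $p_\ell$. The weighted convolution is $(g_1\ast\cdots\ast g_t)_{\vec m}(k)=\sum g_1(k_1)\cdots g_t(k_t)$ over all nonnegative integer vectors with $\sum_im_ik_i=k$. For a positive integer $S$, a function $g$ on nonnegative integers is a mod-$S$ polyexponential of base $\ell$ if there are an integer $K$ and functions $p_0,\dots,p_{S-1}$, each of the form (polynomial in $k$)$\cdot\ell^k$, with $g(k)=p_i((k-i)/S)$ whenever $k\ge K$ and $k\equiv i\pmod S$. A mod-$S$ polyexponential is a finite sum of mod-$S$ polyexponentials of various bases, and its bases are the bases involved in the sum. *)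

theory Defs
  imports "HOL-Analysis.Analysis" "HOL-Computational_Algebra.Polynomial"
begin

definition polyexp :: "complex set \<Rightarrow> (nat \<Rightarrow> complex) \<Rightarrow> bool" where
  "polyexp L g \<longleftrightarrow> finite L \<and>
     (\<exists>p :: complex \<Rightarrow> complex poly. \<forall>k. g k = (\<Sum>l\<in>L. poly (p l) (of_nat k) * l ^ k))"

text \<open>Weighted convolution of g_0,...,g_(t-1) with weights m_0,...,m_(t-1):
  sum over all k_0..k_(t-1) with sum m_i k_i = k of prod g_i(k_i).
  (With positive weights each k_i is at most k, so the index set is finite.)\<close>
definition wconv :: "nat \<Rightarrow> (nat \<Rightarrow> nat \<Rightarrow> complex) \<Rightarrow> (nat \<Rightarrow> nat) \<Rightarrow> nat \<Rightarrow> complex" where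
  "wconv t g m k =
     (\<Sum>ks\<in>{ks \<in> {..<t} \<rightarrow>\<^sub>E {..k}. (\<Sum>i<t. m i * ks i) = k}. \<Prod>i<t. g i (ks i))"

text \<open>Mod-S polyexponential of base l: there are K and p_0..p_(S-1), each of the form
  (polynomial)*l^k, with g k = p_i((k-i)/S) for k >= K, k = i mod S.  Note (k-i)/S = k div S.\<close>
definition modS_polyexp_base :: "nat \<Rightarrow> complex \<Rightarrow> (nat \<Rightarrow> complex) \<Rightarrow> bool" where
  "modS_polyexp_base S l g \<longleftrightarrow>
     (\<exists>K :: nat. \<exists>q :: nat \<Rightarrow> complex poly.
        \<forall>k\<ge>K. g k = poly (q (k mod S)) (of_nat (k div S)) * l ^ (k div S))"

definition modS_polyexp :: "nat \<Rightarrow> complex set \<Rightarrow> (nat \<Rightarrow> complex) \<Rightarrow> bool" where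
  "modS_polyexp S B g \<longleftrightarrow> finite B \<and>
     (\<exists>h :: complex \<Rightarrow> nat \<Rightarrow> complex.
        (\<forall>l\<in>B. modS_polyexp_base S l (h l)) \<and> (\<forall>k. g k = (\<Sum>l\<in>B. h l k)))"

end

theory Submission
  imports Defs "HOL-Computational_Algebra.Formal_Power_Series"
begin

unbundle no vec_syntax
unbundle fps_syntax


lemma coeff_zero_above:
  fixes q :: "'a::zero poly"
  assumes "\<forall>i\<ge>n. coeff q i = 0"
  shows "q = 0 \<or> degree q < n"
proof (rule ccontr)
  assume "\<not> ?thesis"
  then have "q \<noteq> 0" "degree q \<ge> n" by auto
  then show False using assms leading_coeff_neq_0 by blast
qed

lemma coeff_one_one_pow_Suc: "coeff ([:1, 1:] ^ Suc n :: 'a::comm_ring_1 poly) n = of_nat (Suc n)"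
proof (induction n)
  case 0 then show ?case by simp
next
  case (Suc n)
  define P where "P = ([:1, 1:] :: 'a poly) ^ Suc n"
  have "[:1, 1:] ^ Suc (Suc n) = ([:1,1:] :: 'a poly) * P" by (simp add: P_def)
  also have "\<dots> = P + pCons 0 P"
    by (simp add: algebra_simps)
  finally have "coeff ([:1, 1:] ^ Suc (Suc n) :: 'a poly) (Suc n) = coeff P (Suc n) + coeff P n"
    by simp
  also have "coeff P (Suc n) = 1" using coeff_linear_power[of 1 "Suc n"] by (simp add: P_def)
  also have "coeff P n = of_nat (Suc n)" using Suc by (simp add: P_def)
  finally show ?case by simp
qed

lemma pcompose_monom': "pcompose (monom c n) q = smult c (q ^ n)"
proof -
  have "pcompose ([:0,1:] ^ n) q = q ^ n" for n
    by (induction n) (simp_all add: pcompose_pCons pcompose_1)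
  then show ?thesis by (simp add: monom_altdef pcompose_smult)
qed

definition opT :: "complex \<Rightarrow> complex \<Rightarrow> complex poly \<Rightarrow> complex poly" where
  "opT a c r = smult a (pcompose r [:1,1:]) - smult c r"

lemma opT_add: "opT a c (r1 + r2) = opT a c r1 + opT a c r2"
  by (simp add: opT_def pcompose_add smult_add_right algebra_simps)

lemma opT_solve:
  assumes "a \<noteq> c"
  shows "\<exists>r. opT a c r = s"
proof (induction "degree s" arbitrary: s rule: less_induct)
  case less
  show ?case
  proof (cases "s = 0")
    case True
    then show ?thesis by (intro exI[of _ 0]) (simp add: opT_def)
  next
    case False
    define n where "n = degree s"
    define k where "k = lead_coeff s / (a - c)"
    define r0 where "r0 = monom k n"
    have e: "opT a c r0 = smult (a * k) ([:1,1:] ^ n) - smult (c * k) (monom 1 n)"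
      by (simp add: opT_def r0_def pcompose_monom' smult_monom)
    have d1: "degree (smult (a * k) ([:1,1:] ^ n) :: complex poly) \<le> n"
      using degree_linear_power[of 1 n] degree_smult_le by (metis order.trans)
    have "coeff (opT a c r0) n = a * k - c * k"
      unfolding e by (simp add: coeff_linear_power[of 1 n])
    also have "\<dots> = (a - c) * k" by (simp add: algebra_simps)
    also have "\<dots> = lead_coeff s" using assms by (simp add: k_def)
    finally have cn: "coeff (opT a c r0) n = lead_coeff s" .
    define q where "q = s - opT a c r0"
    have "\<forall>i\<ge>n. coeff q i = 0"
    proof (intro allI impI)
      fix i assume "n \<le> i"
      show "coeff q i = 0"
      proof (cases "i = n")
        case True then show ?thesis using cn by (simp add: q_def n_def)
      next
        case False
        then have "i > n" using \<open>n \<le> i\<close> by simp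
        then have "coeff (smult (a * k) ([:1,1:] ^ n) :: complex poly) i = 0"
          using d1 coeff_eq_0 by (meson le_less_trans)
        moreover have "coeff s i = 0" using \<open>i > n\<close> n_def coeff_eq_0 by blast
        ultimately show ?thesis using \<open>i > n\<close> by (simp add: q_def e coeff_monom)
      qed
    qed
    then have "q = 0 \<or> degree q < n" by (rule coeff_zero_above)
    then show ?thesis
    proof
      assume "q = 0"
      then show ?thesis by (intro exI[of _ r0]) (simp add: q_def)
    next
      assume "degree q < n"
      then obtain r1 where "opT a c r1 = q" using less n_def by blast
      then show ?thesis by (intro exI[of _ "r0 + r1"]) (simp add: opT_add q_def)
    qed
  qed
qed

lemma opT_solve_diff: "\<exists>r. opT 1 1 r = s"
proof (induction "degree s" arbitrary: s rule: less_induct)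
  case less
  show ?case
  proof (cases "s = 0")
    case True
    then show ?thesis by (intro exI[of _ 0]) (simp add: opT_def)
  next
    case False
    define n where "n = degree s"
    define k where "k = lead_coeff s / of_nat (Suc n)"
    define r0 where "r0 = monom k (Suc n)"
    have e: "opT 1 1 r0 = smult k ([:1,1:] ^ Suc n) - smult k (monom 1 (Suc n))"
      by (simp add: opT_def r0_def pcompose_monom' smult_monom del: power_Suc)
    have d1: "degree (smult k ([:1,1:] ^ Suc n) :: complex poly) \<le> Suc n"
      using degree_linear_power[of 1 "Suc n"] degree_smult_le by (metis order.trans)
    have cn: "coeff (opT 1 1 r0) n = lead_coeff s"
    proof -
      have "(of_nat (Suc n)::complex) \<noteq> 0" by (simp only: of_nat_eq_0_iff)
      then have nz: "(1 + of_nat n :: complex) \<noteq> 0" by simp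
      show ?thesis unfolding e using nz by (simp add: coeff_one_one_pow_Suc k_def del: power_Suc)
    qed
    have cn1: "coeff (opT 1 1 r0) (Suc n) = 0"
      unfolding e by (simp add: coeff_linear_power[of 1 "Suc n"] del: power_Suc)
    define q where "q = s - opT 1 1 r0"
    have "\<forall>i\<ge>n. coeff q i = 0"
    proof (intro allI impI)
      fix i assume "n \<le> i"
      show "coeff q i = 0"
      proof (cases "i = n")
        case True then show ?thesis using cn by (simp add: q_def n_def)
      next
        case False
        then have "i > n" using \<open>n \<le> i\<close> by simp
        have "coeff s i = 0" using \<open>i > n\<close> n_def coeff_eq_0 by blast
        show ?thesis
        proof (cases "i = Suc n")
          case True then show ?thesis using \<open>coeff s i = 0\<close> cn1 by (simp add: q_def)
        next
          case False
          then have "i > Suc n" using \<open>i > n\<close> by simp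
          then have "coeff (smult k ([:1,1:] ^ Suc n) :: complex poly) i = 0"
            using d1 coeff_eq_0 by (meson le_less_trans)
          then show ?thesis using \<open>i > Suc n\<close> \<open>coeff s i = 0\<close> by (simp add: q_def e coeff_monom del: power_Suc)
        qed
      qed
    qed
    then have "q = 0 \<or> degree q < n" by (rule coeff_zero_above)
    then show ?thesis
    proof
      assume "q = 0"
      then show ?thesis by (intro exI[of _ r0]) (simp add: q_def)
    next
      assume "degree q < n"
      then obtain r1 where "opT 1 1 r1 = q" using less n_def by blast
      then show ?thesis by (intro exI[of _ "r0 + r1"]) (simp add: opT_add q_def)
    qed
  qed
qed

lemma diff_degree_less:
  fixes p :: "complex poly"
  assumes "degree p > 0"
  shows "degree (p - pcompose p [:-1,1:]) < degree p"
proof -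
  define p' where "p' = p - pcompose p [:-1,1:]"
  have dg: "degree (pcompose p [:-1,1:]) = degree p" by (simp add: degree_pcompose)
  have lc: "lead_coeff (pcompose p [:-1,1:]) = lead_coeff p"
    by (simp add: lead_coeff_comp)
  have "\<forall>i\<ge>degree p. coeff p' i = 0"
  proof (intro allI impI)
    fix i assume "degree p \<le> i"
    show "coeff p' i = 0"
    proof (cases "i = degree p")
      case True then show ?thesis using lc dg by (simp add: p'_def)
    next
      case False then have "i > degree p" using \<open>degree p \<le> i\<close> by simp
      then show ?thesis using dg by (simp add: p'_def coeff_eq_0)
    qed
  qed
  then have "p' = 0 \<or> degree p' < degree p" by (rule coeff_zero_above)
  then show ?thesis using assms by (auto simp: p'_def)
qed


lemma poly_opT: "poly (opT a c r) x = a * poly r (x + 1) - c * poly r x"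
  by (simp add: opT_def poly_pcompose algebra_simps)

lemma term_solve:
  fixes \<beta> b :: complex and p :: "complex poly"
  shows "\<exists>r. \<forall>j::nat. poly r (of_nat j + 1) * \<beta>^(Suc j) - b * (poly r (of_nat j) * \<beta>^j)
             = poly p (of_nat j + 1) * \<beta>^(Suc j)"
proof (cases "\<beta> = 0")
  case True then show ?thesis by (intro exI[of _ 0]) simp
next
  case nz: False
  show ?thesis
  proof (cases "\<beta> = b")
    case False
    obtain r where r: "opT \<beta> b r = smult \<beta> (pcompose p [:1,1:])" using opT_solve False by blast
    have "poly r (of_nat j + 1) * \<beta>^(Suc j) - b * (poly r (of_nat j) * \<beta>^j)
             = poly p (of_nat j + 1) * \<beta>^(Suc j)" for j :: nat
    proof -
      have "poly (opT \<beta> b r) (of_nat j) = poly (smult \<beta> (pcompose p [:1,1:])) (of_nat j)" using r by simp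
      then have "\<beta> * poly r (of_nat j + 1) - b * poly r (of_nat j) = \<beta> * poly p (of_nat j + 1)"
        by (simp add: poly_opT poly_pcompose add.commute)
      then have "(\<beta> * poly r (of_nat j + 1) - b * poly r (of_nat j)) * \<beta>^j = \<beta> * poly p (of_nat j + 1) * \<beta>^j"
        by simp
      then show ?thesis by (simp add: algebra_simps)
    qed
    then show ?thesis by blast
  next
    case True
    obtain r where r: "opT 1 1 r = pcompose p [:1,1:]" using opT_solve_diff by blast
    have "poly r (of_nat j + 1) * \<beta>^(Suc j) - b * (poly r (of_nat j) * \<beta>^j)
             = poly p (of_nat j + 1) * \<beta>^(Suc j)" for j :: nat
    proof -
      have "poly (opT 1 1 r) (of_nat j) = poly (pcompose p [:1,1:]) (of_nat j)" using r by simp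
      then have "poly r (of_nat j + 1) - poly r (of_nat j) = poly p (of_nat j + 1)"
        by (simp add: poly_opT poly_pcompose add.commute)
      then have "(poly r (of_nat j + 1) - poly r (of_nat j)) * \<beta>^(Suc j) = poly p (of_nat j + 1) * \<beta>^(Suc j)"
        by simp
      then show ?thesis using True by (simp add: algebra_simps)
    qed
    then show ?thesis by blast
  qed
qed

lemma L5:
  fixes c e :: "nat \<Rightarrow> complex" and U :: "complex set" and p :: "complex \<Rightarrow> complex poly"
  assumes "finite U" "b \<in> U" "\<forall>j. c (Suc j) = b * c j + e (Suc j)"
    "\<forall>j\<ge>K. e j = (\<Sum>\<beta>\<in>U. poly (p \<beta>) (of_nat j) * \<beta>^j)"
  shows "\<exists>K' q. \<forall>j\<ge>K'. c j = (\<Sum>\<beta>\<in>U. poly (q \<beta>) (of_nat j) * \<beta>^j)"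
proof -
  have "\<forall>\<beta>. \<exists>r. \<forall>j::nat. poly r (of_nat j + 1) * \<beta>^(Suc j) - b * (poly r (of_nat j) * \<beta>^j)
             = poly (p \<beta>) (of_nat j + 1) * \<beta>^(Suc j)" using term_solve by blast
  then obtain r where r: "\<And>\<beta> j. poly (r \<beta>) (of_nat j + 1) * \<beta>^(Suc j) - b * (poly (r \<beta>) (of_nat j) * \<beta>^j)
             = poly (p \<beta>) (of_nat j + 1) * \<beta>^(Suc j)" by metis
  define u where "u j = c j - (\<Sum>\<beta>\<in>U. poly (r \<beta>) (of_nat j) * \<beta>^j)" for j
  have rec: "u (Suc j) = b * u j" if "j \<ge> K" for j
  proof -
    have eS: "e (Suc j) = (\<Sum>\<beta>\<in>U. poly (p \<beta>) (of_nat j + 1) * \<beta>^(Suc j))"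
      using assms(4) that by (simp add: add.commute)
    have "(\<Sum>\<beta>\<in>U. poly (r \<beta>) (of_nat (Suc j)) * \<beta>^(Suc j))
        = (\<Sum>\<beta>\<in>U. b * (poly (r \<beta>) (of_nat j) * \<beta>^j) + poly (p \<beta>) (of_nat j + 1) * \<beta>^(Suc j))"
    proof (rule sum.cong[OF refl])
      fix \<beta> assume "\<beta> \<in> U"
      show "poly (r \<beta>) (of_nat (Suc j)) * \<beta>^(Suc j) = b * (poly (r \<beta>) (of_nat j) * \<beta>^j) + poly (p \<beta>) (of_nat j + 1) * \<beta>^(Suc j)"
      proof -
        have h1: "poly (r \<beta>) (of_nat j + 1) * \<beta>^(Suc j) = poly (p \<beta>) (of_nat j + 1) * \<beta>^(Suc j) + b * (poly (r \<beta>) (of_nat j) * \<beta>^j)"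
          using r[of \<beta> j] by (simp only: diff_eq_eq)
        have h2: "(of_nat (Suc j) :: complex) = of_nat j + 1" by simp
        show ?thesis unfolding h2 h1 by (rule add.commute)
      qed
    qed
    also have "\<dots> = b * (\<Sum>\<beta>\<in>U. poly (r \<beta>) (of_nat j) * \<beta>^j) + e (Suc j)"
      by (simp add: sum.distrib sum_distrib_left eS)
    finally show ?thesis using assms(3) by (simp add: u_def algebra_simps)
  qed
  have pw: "u (K + i) = b^i * u K" for i
    by (induction i) (simp_all add: rec)
  define C where "C = (if b = 0 then 0 else u K / b^K)"
  have uC: "u j = C * b^j" if "j \<ge> Suc K" for j
  proof -
    define i where "i = j - K"
    have i: "j = K + i" "i \<ge> 1" using \<open>j \<ge> Suc K\<close> by (simp_all add: i_def)
    show ?thesis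
    proof (cases "b = 0")
      case True then show ?thesis using i pw by (simp add: C_def)
    next
      case False then show ?thesis using i pw by (simp add: C_def power_add)
    qed
  qed
  define q where "q \<beta> = r \<beta> + (if \<beta> = b then [:C:] else 0)" for \<beta>
  have "c j = (\<Sum>\<beta>\<in>U. poly (q \<beta>) (of_nat j) * \<beta>^j)" if "j \<ge> Suc K" for j
  proof -
    have "(\<Sum>\<beta>\<in>U. poly (q \<beta>) (of_nat j) * \<beta>^j)
       = (\<Sum>\<beta>\<in>U. poly (r \<beta>) (of_nat j) * \<beta>^j) + (\<Sum>\<beta>\<in>U. if \<beta> = b then C * b^j else 0)"
    proof -
      have "(\<Sum>\<beta>\<in>U. poly (q \<beta>) (of_nat j) * \<beta>^j)
          = (\<Sum>\<beta>\<in>U. poly (r \<beta>) (of_nat j) * \<beta>^j + (if \<beta> = b then C * b^j else 0))"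
        by (intro sum.cong refl) (auto simp: q_def algebra_simps)
      then show ?thesis by (simp add: sum.distrib)
    qed
    also have "(\<Sum>\<beta>\<in>U. if \<beta> = b then C * b^j else 0) = C * b^j"
      using assms(1,2) by simp
    finally show ?thesis using uC[OF that] unfolding u_def by (simp add: diff_eq_eq add.commute)
  qed
  then show ?thesis by blast
qed



definition ispoly :: "complex fps \<Rightarrow> bool" where
  "ispoly F \<longleftrightarrow> (\<exists>N. \<forall>k\<ge>N. F $ k = 0)"

lemma ispoly_0: "ispoly 0" by (auto simp: ispoly_def)

lemma ispoly_const: "ispoly (fps_const c)"
  unfolding ispoly_def by (intro exI[of _ 1]) auto

lemma ispoly_1: "ispoly 1"
  using ispoly_const[of 1] by simp

lemma ispoly_X: "ispoly fps_X"
  unfolding ispoly_def by (intro exI[of _ 2]) (auto simp: fps_X_def)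

lemma ispoly_add: "ispoly F \<Longrightarrow> ispoly G \<Longrightarrow> ispoly (F + G)"
  unfolding ispoly_def by (metis fps_add_nth add_0 max.bounded_iff nat_le_linear)

lemma ispoly_uminus: "ispoly F \<Longrightarrow> ispoly (- F)"
  unfolding ispoly_def by auto

lemma ispoly_diff: "ispoly F \<Longrightarrow> ispoly G \<Longrightarrow> ispoly (F - G)"
  using ispoly_add[of F "-G"] ispoly_uminus by simp

lemma ispoly_mult: "ispoly F \<Longrightarrow> ispoly G \<Longrightarrow> ispoly (F * G)"
proof -
  assume "ispoly F" "ispoly G"
  then obtain N1 N2 where n1: "\<forall>k\<ge>N1. F $ k = 0" and n2: "\<forall>k\<ge>N2. G $ k = 0"
    unfolding ispoly_def by blast
  have "(F * G) $ k = 0" if "k \<ge> N1 + N2" for k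
    unfolding fps_mult_nth
  proof (intro sum.neutral ballI)
    fix i assume "i \<in> {0..k}"
    show "F $ i * G $ (k - i) = 0"
    proof (cases "i \<ge> N1")
      case True then show ?thesis using n1 by simp
    next
      case False then have "k - i \<ge> N2" using that by simp
      then show ?thesis using n2 by simp
    qed
  qed
  then show ?thesis unfolding ispoly_def by blast
qed

lemma ispoly_power: "ispoly F \<Longrightarrow> ispoly (F ^ n)"
  by (induction n) (simp_all add: ispoly_1 ispoly_mult)

lemma ispoly_prod: "(\<And>i. i \<in> I \<Longrightarrow> ispoly (F i)) \<Longrightarrow> ispoly (\<Prod>i\<in>I. F i)"
  by (induction I rule: infinite_finite_induct) (simp_all add: ispoly_1 ispoly_mult)

lemma ispoly_sum: "(\<And>i. i \<in> I \<Longrightarrow> ispoly (F i)) \<Longrightarrow> ispoly (\<Sum>i\<in>I. F i)"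
  by (induction I rule: infinite_finite_induct) (simp_all add: ispoly_0 ispoly_add)

lemma ispoly_lin: "ispoly (1 - fps_const c * fps_X ^ S)"
  by (intro ispoly_diff ispoly_1 ispoly_mult ispoly_const ispoly_power ispoly_X)

definition evform :: "nat \<Rightarrow> complex set \<Rightarrow> (nat \<Rightarrow> complex) \<Rightarrow> bool" where
  "evform S U a \<longleftrightarrow> (\<exists>K q. \<forall>k\<ge>K. a k = (\<Sum>\<beta>\<in>U. poly (q \<beta> (k mod S)) (of_nat (k div S)) * \<beta>^(k div S)))"

lemma L5S:
  fixes a d :: "nat \<Rightarrow> complex"
  assumes "S > 0" "finite U" "b \<in> U" "\<forall>k. a (k + S) = b * a k + d (k + S)"
    "evform S U d"
  shows "evform S U a"
proof -
  obtain K p where K: "\<forall>k\<ge>K. d k = (\<Sum>\<beta>\<in>U. poly (p \<beta> (k mod S)) (of_nat (k div S)) * \<beta>^(k div S))"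
    using assms(5) unfolding evform_def by blast
  have "\<forall>r. \<exists>K' q. r < S \<longrightarrow> (\<forall>j\<ge>K'. a (S * j + r) = (\<Sum>\<beta>\<in>U. poly (q \<beta>) (of_nat j) * \<beta>^j))"
  proof (intro allI)
    fix r
    show "\<exists>K' q. r < S \<longrightarrow> (\<forall>j\<ge>K'. a (S * j + r) = (\<Sum>\<beta>\<in>U. poly (q \<beta>) (of_nat j) * \<beta>^j))"
    proof (cases "r < S")
      case False then show ?thesis by blast
    next
      case True
      have rec: "\<forall>j. a (S * Suc j + r) = b * a (S * j + r) + d (S * Suc j + r)"
      proof
        fix j
        have eq: "S * Suc j + r = (S * j + r) + S" by simp
        show "a (S * Suc j + r) = b * a (S * j + r) + d (S * Suc j + r)"
          unfolding eq by (rule assms(4)[rule_format])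
      qed
      have e: "\<forall>j\<ge>K. d (S * j + r) = (\<Sum>\<beta>\<in>U. poly (p \<beta> r) (of_nat j) * \<beta>^j)"
      proof (intro allI impI)
        fix j assume "j \<ge> K"
        moreover have "j \<le> S * j" using assms(1) by simp
        ultimately have "S * j + r \<ge> K" by linarith
        moreover have "(S * j + r) mod S = r" "(S * j + r) div S = j" using True assms(1) by auto
        ultimately show "d (S * j + r) = (\<Sum>\<beta>\<in>U. poly (p \<beta> r) (of_nat j) * \<beta>^j)"
          using K by metis
      qed
      have "\<exists>K' q. \<forall>j\<ge>K'. a (S * j + r) = (\<Sum>\<beta>\<in>U. poly (q \<beta>) (of_nat j) * \<beta>^j)"
        by (rule L5[of U b "\<lambda>j. a (S * j + r)" "\<lambda>j. d (S * j + r)" K "\<lambda>\<beta>. p \<beta> r"])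
           (use assms(2,3) rec e in auto)
      then show ?thesis by blast
    qed
  qed
  then obtain Kf qf where Q: "\<And>r j. r < S \<Longrightarrow> j \<ge> Kf r \<Longrightarrow> a (S * j + r) = (\<Sum>\<beta>\<in>U. poly (qf r \<beta>) (of_nat j) * \<beta>^j)"
    by metis
  define K' where "K' = S * (\<Sum>r<S. Kf r)"
  have "a k = (\<Sum>\<beta>\<in>U. poly (qf (k mod S) \<beta>) (of_nat (k div S)) * \<beta>^(k div S))" if "k \<ge> K'" for k
  proof -
    have r: "k mod S < S" using assms(1) by simp
    have "K' div S \<le> k div S" using that by (rule div_le_mono)
    then have "(\<Sum>r<S. Kf r) \<le> k div S" unfolding K'_def using assms(1) by simp
    moreover have "Kf (k mod S) \<le> (\<Sum>r<S. Kf r)" using r by (intro member_le_sum) auto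
    ultimately have "Kf (k mod S) \<le> k div S" by linarith
    from Q[OF r this] show ?thesis by simp
  qed
  then show ?thesis unfolding evform_def by (intro exI[of _ K'] exI[of _ "\<lambda>\<beta> r. qf r \<beta>"]) auto
qed

lemma coeff_mult_lin:
  fixes A :: "complex fps"
  shows "(A * (1 - fps_const c * fps_X ^ S)) $ n = A $ n - c * (if n < S then 0 else A $ (n - S))"
proof -
  have "A * (1 - fps_const c * fps_X ^ S) = A - fps_const c * (A * fps_X ^ S)"
    by (simp add: right_diff_distrib mult.left_commute)
  then show ?thesis by (simp add: fps_X_power_mult_right_nth)
qed

lemma step5:
  fixes \<beta> :: "'i \<Rightarrow> complex"
  assumes "finite I" "S > 0" "finite U" "\<beta> ` I \<subseteq> U"
  shows "ispoly (A * (\<Prod>x\<in>I. 1 - fps_const (\<beta> x) * fps_X ^ S)) \<Longrightarrow> evform S U (\<lambda>k. A $ k)"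
  using assms(1,4)
proof (induction I arbitrary: A rule: finite_induct)
  case empty
  then obtain N where "\<forall>k\<ge>N. A $ k = 0" unfolding ispoly_def by auto
  then show ?case unfolding evform_def by (intro exI[of _ N] exI[of _ "\<lambda>_ _. 0"]) simp
next
  case (insert x I)
  define A' where "A' = A * (1 - fps_const (\<beta> x) * fps_X ^ S)"
  have "ispoly (A' * (\<Prod>x\<in>I. 1 - fps_const (\<beta> x) * fps_X ^ S))"
    using insert.prems insert.hyps by (simp add: A'_def mult.assoc)
  then have ev: "evform S U (\<lambda>k. A' $ k)" using insert.IH insert.prems by auto
  have rec: "\<forall>k. A $ (k + S) = \<beta> x * A $ k + A' $ (k + S)"
    by (simp add: A'_def coeff_mult_lin)
  show ?case
    by (rule L5S[OF assms(2,3) _ rec ev]) (use insert.prems in auto)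
qed



lemma T1_step:
  fixes p :: "complex poly" and l :: complex
  defines "p' \<equiv> p - pcompose p [:-1,1:]"
  shows "Abs_fps (\<lambda>k. poly p (of_nat k) * l^k) * (1 - fps_const l * fps_X)
       = Abs_fps (\<lambda>k. poly p' (of_nat k) * l^k) + fps_const (poly p 0 - poly p' 0)"
proof (rule fps_ext)
  fix n
  have "(Abs_fps (\<lambda>k. poly p (of_nat k) * l^k) * (1 - fps_const l * fps_X ^ 1)) $ n
     = poly p (of_nat n) * l^n - l * (if n < 1 then 0 else poly p (of_nat (n - 1)) * l^(n-1))"
    by (simp only: coeff_mult_lin fps_nth_Abs_fps)
  also have "\<dots> = (Abs_fps (\<lambda>k. poly p' (of_nat k) * l^k) + fps_const (poly p 0 - poly p' 0)) $ n"
  proof (cases n)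
    case 0 then show ?thesis by simp
  next
    case (Suc m)
    have "poly p' (of_nat n) = poly p (of_nat n) - poly p (of_nat m)"
      by (simp add: p'_def poly_pcompose Suc)
    have "poly p (of_nat n) * l^n - l * (if n < 1 then 0 else poly p (of_nat (n - 1)) * l^(n-1))
       = (poly p (of_nat n) - poly p (of_nat m)) * l^n" using Suc by (simp add: algebra_simps)
    then show ?thesis using \<open>poly p' (of_nat n) = _\<close> Suc by simp
  qed
  finally show "(Abs_fps (\<lambda>k. poly p (of_nat k) * l^k) * (1 - fps_const l * fps_X)) $ n =
         (Abs_fps (\<lambda>k. poly p' (of_nat k) * l^k) + fps_const (poly p 0 - poly p' 0)) $ n"
    by simp
qed

lemma T1: "\<exists>N. ispoly (Abs_fps (\<lambda>k. poly p (of_nat k) * l^k) * (1 - fps_const l * fps_X) ^ N)"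
proof (induction "degree p" arbitrary: p rule: less_induct)
  case less
  define p' where "p' = p - pcompose p [:-1,1:]"
  have eq: "Abs_fps (\<lambda>k. poly p (of_nat k) * l^k) * (1 - fps_const l * fps_X)
       = Abs_fps (\<lambda>k. poly p' (of_nat k) * l^k) + fps_const (poly p 0 - poly p' 0)"
    unfolding p'_def by (rule T1_step)
  show ?case
  proof (cases "degree p = 0")
    case True
    then obtain c where "p = [:c:]" by (metis degree_eq_zeroE)
    then have "p' = 0" by (simp add: p'_def)
    moreover have "Abs_fps (\<lambda>k. 0::complex) = 0" by (simp add: fps_eq_iff)
    ultimately show ?thesis using eq by (intro exI[of _ 1]) (simp add: ispoly_const)
  next
    case False
    then have "degree p' < degree p" unfolding p'_def by (intro diff_degree_less) simp
    then obtain N where N: "ispoly (Abs_fps (\<lambda>k. poly p' (of_nat k) * l^k) * (1 - fps_const l * fps_X) ^ N)"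
      using less by blast
    have "Abs_fps (\<lambda>k. poly p (of_nat k) * l^k) * (1 - fps_const l * fps_X) ^ Suc N
       = Abs_fps (\<lambda>k. poly p' (of_nat k) * l^k) * (1 - fps_const l * fps_X) ^ N
         + fps_const (poly p 0 - poly p' 0) * (1 - fps_const l * fps_X) ^ N"
    proof -
      have "Abs_fps (\<lambda>k. poly p (of_nat k) * l^k) * (1 - fps_const l * fps_X) ^ Suc N
          = (Abs_fps (\<lambda>k. poly p (of_nat k) * l^k) * (1 - fps_const l * fps_X)) * (1 - fps_const l * fps_X) ^ N"
        by (simp only: power_Suc mult.assoc)
      then show ?thesis by (simp only: eq distrib_right)
    qed
    then show ?thesis using N
      by (intro exI[of _ "Suc N"]) (simp add: ispoly_add ispoly_mult ispoly_power ispoly_const ispoly_diff ispoly_1 ispoly_X)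
  qed
qed

lemma step1:
  assumes "polyexp L g"
  shows "\<exists>N. ispoly (Abs_fps g * (\<Prod>l\<in>L. (1 - fps_const l * fps_X) ^ N))"
proof -
  obtain p where fin: "finite L" and p: "\<forall>k. g k = (\<Sum>l\<in>L. poly (p l) (of_nat k) * l ^ k)"
    using assms unfolding polyexp_def by blast
  have "\<forall>l. \<exists>N. ispoly (Abs_fps (\<lambda>k. poly (p l) (of_nat k) * l^k) * (1 - fps_const l * fps_X) ^ N)"
    using T1 by blast
  then obtain N where N: "\<And>l. ispoly (Abs_fps (\<lambda>k. poly (p l) (of_nat k) * l^k) * (1 - fps_const l * fps_X) ^ N l)"
    by metis
  define Nt where "Nt = (\<Sum>l\<in>L. N l)"
  have ag: "Abs_fps g = (\<Sum>l\<in>L. Abs_fps (\<lambda>k. poly (p l) (of_nat k) * l^k))"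
    by (rule fps_ext) (simp add: p fps_sum_nth)
  have "ispoly (Abs_fps (\<lambda>k. poly (p l0) (of_nat k) * l0^k) * (\<Prod>l\<in>L. (1 - fps_const l * fps_X) ^ Nt))"
    if "l0 \<in> L" for l0
  proof -
    have le: "N l0 \<le> Nt" unfolding Nt_def using fin that by (intro member_le_sum) auto
    have "(\<Prod>l\<in>L. (1 - fps_const l * fps_X) ^ Nt)
        = (1 - fps_const l0 * fps_X) ^ Nt * (\<Prod>l\<in>L - {l0}. (1 - fps_const l * fps_X) ^ Nt)"
      using fin that by (rule prod.remove)
    also have "\<dots> = (1 - fps_const l0 * fps_X) ^ N l0 * ((1 - fps_const l0 * fps_X) ^ (Nt - N l0) *
                 (\<Prod>l\<in>L - {l0}. (1 - fps_const l * fps_X) ^ Nt))"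
      using le by (simp add: power_add[symmetric] mult.assoc)
    finally have e: "Abs_fps (\<lambda>k. poly (p l0) (of_nat k) * l0^k) * (\<Prod>l\<in>L. (1 - fps_const l * fps_X) ^ Nt)
      = (Abs_fps (\<lambda>k. poly (p l0) (of_nat k) * l0^k) * (1 - fps_const l0 * fps_X) ^ N l0) *
        ((1 - fps_const l0 * fps_X) ^ (Nt - N l0) * (\<Prod>l\<in>L - {l0}. (1 - fps_const l * fps_X) ^ Nt))"
      by (simp add: mult.assoc)
    show ?thesis unfolding e
      by (intro ispoly_mult N ispoly_power ispoly_prod ispoly_diff ispoly_1 ispoly_const ispoly_X)
  qed
  then have "ispoly (\<Sum>l\<in>L. Abs_fps (\<lambda>k. poly (p l) (of_nat k) * l^k) * (\<Prod>l\<in>L. (1 - fps_const l * fps_X) ^ Nt))"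
    by (intro ispoly_sum)
  then show ?thesis unfolding ag sum_distrib_right by blast
qed



lemma compose_Xm_nth:
  fixes F :: "complex fps"
  assumes "m > 0"
  shows "(F oo fps_X ^ m) $ k = (if m dvd k then F $ (k div m) else 0)"
proof -
  have "(F oo fps_X ^ m) $ k = (\<Sum>i\<in>{0..k}. if k = m * i then F $ i else 0)"
    unfolding fps_compose_nth by (intro sum.cong refl) (simp add: power_mult[symmetric])
  also have "\<dots> = (if m dvd k then F $ (k div m) else 0)"
  proof (cases "m dvd k")
    case True
    then obtain j where j: "k = m * j" by blast
    have "j \<le> k" using j assms by simp
    have "(\<Sum>i\<in>{0..k}. if k = m * i then F $ i else 0) = (\<Sum>i\<in>{0..k}. if i = j then F $ i else 0)"
      using j assms by (intro sum.cong refl) auto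
    also have "\<dots> = F $ j" using \<open>j \<le> k\<close> by simp
    finally show ?thesis using True j assms by simp
  next
    case False
    then have "(\<Sum>i\<in>{0..k}. if k = m * i then F $ i else 0) = 0"
      by (intro sum.neutral) auto
    then show ?thesis using False by simp
  qed
  finally show ?thesis .
qed

lemma ispoly_compose_Xm:
  assumes "m > 0" "ispoly F"
  shows "ispoly (F oo fps_X ^ m)"
proof -
  obtain N where N: "\<forall>k\<ge>N. F $ k = 0" using assms(2) unfolding ispoly_def by blast
  have "(F oo fps_X ^ m) $ k = 0" if "k \<ge> m * N" for k
  proof -
    have "m * N div m \<le> k div m" using that by (rule div_le_mono)
    then have "k div m \<ge> N" using assms(1) by simp
    then show ?thesis using N assms(1) by (simp add: compose_Xm_nth)
  qed
  then show ?thesis unfolding ispoly_def by blast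
qed

lemma step3:
  fixes L :: "complex set" and g :: "nat \<Rightarrow> complex"
  assumes "polyexp L g" "m > 0" "S = m * d"
  shows "\<exists>N. ispoly ((Abs_fps g oo fps_X ^ m) * (\<Prod>l\<in>L. (1 - fps_const (l ^ d) * fps_X ^ S) ^ N))"
proof -
  obtain N where N: "ispoly (Abs_fps g * (\<Prod>l\<in>L. (1 - fps_const l * fps_X) ^ N))"
    using step1[OF assms(1)] by blast
  have X0: "(fps_X ^ m :: complex fps) $ 0 = 0" using assms(2) by simp
  have "(Abs_fps g * (\<Prod>l\<in>L. (1 - fps_const l * fps_X) ^ N)) oo fps_X ^ m
      = (Abs_fps g oo fps_X ^ m) * (\<Prod>l\<in>L. (1 - fps_const l * fps_X ^ m) ^ N)"
    using X0 by (simp add: fps_compose_mult_distrib fps_compose_prod_distrib fps_compose_power[symmetric]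
          fps_compose_sub_distrib)
  then have P1: "ispoly ((Abs_fps g oo fps_X ^ m) * (\<Prod>l\<in>L. (1 - fps_const l * fps_X ^ m) ^ N))"
    using ispoly_compose_Xm[OF assms(2) N] by simp
  define cof where "cof l = (\<Sum>i<d. (fps_const l * fps_X ^ m) ^ i)" for l :: complex
  have fac: "1 - fps_const (l ^ d) * fps_X ^ S = (1 - fps_const l * fps_X ^ m) * cof l" for l
  proof -
    have pw: "((fps_const l :: complex fps) * fps_X ^ m) ^ d = fps_const (l ^ d) * (fps_X ^ S :: complex fps)"
      by (simp add: power_mult_distrib assms(3) power_mult)
    show ?thesis unfolding cof_def pw[symmetric] by (rule one_diff_power_eq)
  qed
  have "(\<Prod>l\<in>L. (1 - fps_const (l ^ d) * fps_X ^ S) ^ N)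
      = (\<Prod>l\<in>L. (1 - fps_const l * fps_X ^ m) ^ N) * (\<Prod>l\<in>L. cof l ^ N)"
    by (simp add: fac power_mult_distrib prod.distrib)
  then have "(Abs_fps g oo fps_X ^ m) * (\<Prod>l\<in>L. (1 - fps_const (l ^ d) * fps_X ^ S) ^ N)
      = ((Abs_fps g oo fps_X ^ m) * (\<Prod>l\<in>L. (1 - fps_const l * fps_X ^ m) ^ N)) * (\<Prod>l\<in>L. cof l ^ N)"
    by (simp add: mult.assoc)
  moreover have "ispoly (\<Prod>l\<in>L. cof l ^ N)"
    unfolding cof_def by (intro ispoly_prod ispoly_power ispoly_sum ispoly_mult ispoly_const ispoly_X)
  ultimately show ?thesis using P1 ispoly_mult by metis
qed



definition Wsum :: "nat \<Rightarrow> (nat \<Rightarrow> nat \<Rightarrow> complex) \<Rightarrow> (nat \<Rightarrow> nat) \<Rightarrow> nat \<Rightarrow> nat \<Rightarrow> complex" where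
  "Wsum t g m M k = (\<Sum>ks\<in>{..<t} \<rightarrow>\<^sub>E {..M}. if (\<Sum>i<t. m i * ks i) = k then \<Prod>i<t. g i (ks i) else 0)"

lemma Wbound:
  assumes "k \<le> M" "\<forall>i<t. 0 < m i"
  shows "wconv t g m k = Wsum t g m M k"
proof -
  have "{ks \<in> {..<t} \<rightarrow>\<^sub>E {..k}. (\<Sum>i<t. m i * ks i) = k} = {ks \<in> {..<t} \<rightarrow>\<^sub>E {..M}. (\<Sum>i<t. m i * ks i) = k}"
  proof (intro equalityI subsetI)
    fix ks assume "ks \<in> {ks \<in> {..<t} \<rightarrow>\<^sub>E {..k}. (\<Sum>i<t. m i * ks i) = k}"
    then show "ks \<in> {ks \<in> {..<t} \<rightarrow>\<^sub>E {..M}. (\<Sum>i<t. m i * ks i) = k}" using assms(1) by (auto simp: PiE_def Pi_def)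
  next
    fix ks assume a: "ks \<in> {ks \<in> {..<t} \<rightarrow>\<^sub>E {..M}. (\<Sum>i<t. m i * ks i) = k}"
    have "ks i \<le> k" if "i < t" for i
    proof -
      have "0 < m i" using assms(2) that by blast
      then have "1 * ks i \<le> m i * ks i" by (intro mult_le_mono1) simp
      then have "ks i \<le> m i * ks i" by simp
      also have "\<dots> \<le> (\<Sum>i<t. m i * ks i)" using that by (intro member_le_sum) auto
      finally show ?thesis using a by simp
    qed
    then show "ks \<in> {ks \<in> {..<t} \<rightarrow>\<^sub>E {..k}. (\<Sum>i<t. m i * ks i) = k}" using a by (auto simp: PiE_def Pi_def)
  qed
  then show ?thesis unfolding wconv_def Wsum_def
    by (simp add: sum.inter_filter[symmetric] finite_PiE)
qed

lemma Wrec: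
  "Wsum (Suc t) g m M k = (\<Sum>x\<in>{..M}. \<Sum>ks\<in>{..<t} \<rightarrow>\<^sub>E {..M}.
      if (\<Sum>i<t. m i * ks i) + m t * x = k then (\<Prod>i<t. g i (ks i)) * g t x else 0)"
proof -
  have e: "{..<Suc t} \<rightarrow>\<^sub>E {..M} = (\<lambda>(y, g). g(t := y)) ` ({..M} \<times> ({..<t} \<rightarrow>\<^sub>E {..M}))"
    using PiE_insert_eq[of t "{..<t}" "\<lambda>_. {..M}"] by (simp add: lessThan_Suc)
  have inj: "inj_on (\<lambda>(y, g). g(t := y)) ({..M} \<times> ({..<t} \<rightarrow>\<^sub>E {..M}))"
    using inj_combinator[of t "{..<t}" "\<lambda>_. {..M}"] by simp
  have s1: "(\<Sum>i<Suc t. m i * (ks(t := x)) i) = (\<Sum>i<t. m i * ks i) + m t * x" for ks x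
    by (simp add: lessThan_Suc)
  have p1: "(\<Prod>i<Suc t. g i ((ks(t := x)) i)) = (\<Prod>i<t. g i (ks i)) * g t x" for ks x
  proof -
    have "(\<Prod>i<t. g i ((ks(t := x)) i)) = (\<Prod>i<t. g i (ks i))" by (intro prod.cong refl) simp
    then show ?thesis by (simp add: lessThan_Suc prod.insert mult.commute)
  qed
  have s1': "(\<Sum>i<t. m i * (ks(t := x)) i) = (\<Sum>i<t. m i * ks i)" for ks x
    by (intro sum.cong refl) simp
  have p1': "(\<Prod>i<t. g i ((ks(t := x)) i)) = (\<Prod>i<t. g i (ks i))" for ks x
    by (intro prod.cong refl) simp
  show ?thesis
    unfolding Wsum_def e sum.reindex[OF inj] sum.cartesian_product
    by (intro sum.cong refl) (auto simp: s1 p1 s1' p1' split: prod.splits)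
qed

lemma dil_sum:
  fixes f :: "nat \<Rightarrow> complex"
  assumes "0 < mm"
  shows "(\<Sum>x\<in>{..k}. if s + mm * x = k then f x else 0) = (if s \<le> k \<and> mm dvd (k - s) then f ((k - s) div mm) else 0)"
proof (cases "s \<le> k \<and> mm dvd (k - s)")
  case True
  define x0 where "x0 = (k - s) div mm"
  have x0: "mm * x0 = k - s" using True by (simp add: x0_def)
  have "1 * x0 \<le> mm * x0" using assms by (intro mult_le_mono1) simp
  then have "x0 \<le> k" using x0 by simp
  have "(\<Sum>x\<in>{..k}. if s + mm * x = k then f x else 0) = (\<Sum>x\<in>{..k}. if x = x0 then f x else 0)"
  proof (intro sum.cong refl)
    fix x
    have "s + mm * x = k \<longleftrightarrow> x = x0" using x0 True assms by auto
    then show "(if s + mm * x = k then f x else 0) = (if x = x0 then f x else 0)" by simp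
  qed
  also have "\<dots> = f x0" using \<open>x0 \<le> k\<close> by simp
  finally show ?thesis using True x0_def by simp
next
  case False
  have "(\<Sum>x\<in>{..k}. if s + mm * x = k then f x else 0) = 0"
  proof (intro sum.neutral ballI)
    fix x
    show "(if s + mm * x = k then f x else 0) = 0"
    proof (cases "s + mm * x = k")
      case True
      then have "s \<le> k \<and> mm dvd (k - s)" by auto
      then show ?thesis using False by blast
    qed simp
  qed
  then show ?thesis by (subst if_not_P[OF False]) simp
qed

lemma step2:
  assumes "\<forall>i<t. 0 < m i"
  shows "Abs_fps (wconv t g m) = (\<Prod>i<t. Abs_fps (g i) oo fps_X ^ m i)"
  using assms
proof (induction t)
  case 0
  show ?case
  proof (rule fps_ext)
    fix k
    show "Abs_fps (wconv 0 g m) $ k = (\<Prod>i<0. Abs_fps (g i) oo fps_X ^ m i) $ k"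
      by (simp add: wconv_def PiE_empty_domain)
  qed
next
  case (Suc t)
  then have mpos: "\<forall>i<t. 0 < m i" and mt: "0 < m t" by auto
  have IH: "Abs_fps (wconv t g m) = (\<Prod>i<t. Abs_fps (g i) oo fps_X ^ m i)" using Suc mpos by blast
  show ?case
  proof (rule fps_ext)
    fix k
    define P where "P ks = (\<Prod>i<t. g i (ks i))" for ks :: "nat \<Rightarrow> nat"
    define s where "s ks = (\<Sum>i<t. m i * ks i)" for ks :: "nat \<Rightarrow> nat"
    define D where "D n = (if m t dvd n then g t (n div m t) else 0)" for n
    have "(\<Prod>i<Suc t. Abs_fps (g i) oo fps_X ^ m i) $ k
        = (Abs_fps (wconv t g m) * (Abs_fps (g t) oo fps_X ^ m t)) $ k"
      by (simp add: IH lessThan_Suc mult.commute)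
    also have "\<dots> = (\<Sum>j\<in>{..k}. Abs_fps (wconv t g m) $ j * (Abs_fps (g t) oo fps_X ^ m t) $ (k - j))"
      by (simp add: fps_mult_nth atLeast0AtMost)
    also have "\<dots> = (\<Sum>j\<in>{..k}. wconv t g m j * D (k - j))"
    proof (intro sum.cong refl)
      fix j
      show "Abs_fps (wconv t g m) $ j * (Abs_fps (g t) oo fps_X ^ m t) $ (k - j) = wconv t g m j * D (k - j)"
        unfolding compose_Xm_nth[OF mt] D_def fps_nth_Abs_fps ..
    qed
    also have "\<dots> = (\<Sum>j\<in>{..k}. Wsum t g m k j * D (k - j))"
      by (intro sum.cong refl) (simp add: Wbound mpos)
    also have "\<dots> = (\<Sum>j\<in>{..k}. \<Sum>ks\<in>{..<t} \<rightarrow>\<^sub>E {..k}. if s ks = j then P ks * D (k - s ks) else 0)"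
      unfolding Wsum_def sum_distrib_right P_def s_def by (intro sum.cong refl) auto
    also have "\<dots> = (\<Sum>ks\<in>{..<t} \<rightarrow>\<^sub>E {..k}. \<Sum>j\<in>{..k}. if s ks = j then P ks * D (k - s ks) else 0)"
      by (rule sum.swap)
    also have "\<dots> = (\<Sum>ks\<in>{..<t} \<rightarrow>\<^sub>E {..k}. if s ks \<le> k then P ks * D (k - s ks) else 0)"
      by (intro sum.cong refl) (simp add: sum.delta)
    also have "\<dots> = (\<Sum>ks\<in>{..<t} \<rightarrow>\<^sub>E {..k}. P ks * (\<Sum>x\<in>{..k}. if s ks + m t * x = k then g t x else 0))"
      by (intro sum.cong refl) (simp add: dil_sum[OF mt] D_def)
    also have "\<dots> = (\<Sum>x\<in>{..k}. \<Sum>ks\<in>{..<t} \<rightarrow>\<^sub>E {..k}. if s ks + m t * x = k then P ks * g t x else 0)"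
      by (simp add: sum_distrib_left sum.swap[of _ "{..k}"] if_distrib cong: if_cong)
    also have "\<dots> = Wsum (Suc t) g m k k"
      by (simp add: Wrec P_def s_def cong: if_cong)
    also have "\<dots> = wconv (Suc t) g m k"
      using Wbound[of k k "Suc t" m g] Suc.prems by simp
    finally show "Abs_fps (wconv (Suc t) g m) $ k = (\<Prod>i<Suc t. Abs_fps (g i) oo fps_X ^ m i) $ k"
      by simp
  qed
qed



lemma from_evform:
  assumes "finite U" "U \<noteq> {}" "evform S U f"
  shows "modS_polyexp S U f"
proof -
  obtain K q where K: "\<forall>k\<ge>K. f k = (\<Sum>\<beta>\<in>U. poly (q \<beta> (k mod S)) (of_nat (k div S)) * \<beta>^(k div S))"
    using assms(3) unfolding evform_def by blast
  obtain b0 where b0: "b0 \<in> U" using assms(2) by blast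
  define F where "F b k = poly (q b (k mod S)) (of_nat (k div S)) * b^(k div S)" for b k
  define h where "h b k = (if b = b0 then f k - (\<Sum>b'\<in>U - {b0}. F b' k) else F b k)" for b k
  have sumh: "f k = (\<Sum>b\<in>U. h b k)" for k
  proof -
    have "(\<Sum>b\<in>U. h b k) = h b0 k + (\<Sum>b\<in>U - {b0}. h b k)"
      using assms(1) b0 by (rule sum.remove)
    also have "(\<Sum>b\<in>U - {b0}. h b k) = (\<Sum>b\<in>U - {b0}. F b k)"
      by (intro sum.cong refl) (simp add: h_def)
    finally show ?thesis by (simp add: h_def)
  qed
  have "modS_polyexp_base S b (h b)" if "b \<in> U" for b
  proof (cases "b = b0")
    case True
    have "h b k = F b k" if "k \<ge> K" for k
    proof -
      have "f k = (\<Sum>b\<in>U. F b k)" using K that by (simp add: F_def)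
      also have "\<dots> = F b0 k + (\<Sum>b\<in>U - {b0}. F b k)"
        using assms(1) b0 by (rule sum.remove)
      finally show ?thesis using True by (simp add: h_def)
    qed
    then show ?thesis unfolding modS_polyexp_base_def F_def by blast
  next
    case False
    then show ?thesis unfolding modS_polyexp_base_def h_def F_def by auto
  qed
  then show ?thesis unfolding modS_polyexp_def using assms(1) sumh by blast
qed

theorem theorem3p22:
  fixes t :: nat and L :: "complex set" and g :: "nat \<Rightarrow> nat \<Rightarrow> complex" and m :: "nat \<Rightarrow> nat"
  assumes "0 < t"
    and "finite L"
    and "\<forall>i<t. polyexp L (g i)"
    and "\<forall>i<t. 0 < m i"
    and "S = Lcm (m ` {..<t})"
  shows "\<exists>B. B \<subseteq> (\<Union>i<t. (\<lambda>l. l ^ (S div m i)) ` L) \<and> modS_polyexp S B (wconv t g m)"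
proof (cases "L = {}")
  case True
  have g0: "g i k = 0" if "i < t" for i k
    using assms(3) that True unfolding polyexp_def by auto
  have "wconv t g m k = 0" for k
    unfolding wconv_def
  proof (intro sum.neutral ballI)
    fix ks
    have "(\<Prod>i<t. g i (ks i)) = 0"
      using assms(1) g0 by (intro prod_zero) auto
    then show "(\<Prod>i<t. g i (ks i)) = 0" .
  qed
  then show ?thesis by (intro exI[of _ "{}"]) (simp add: modS_polyexp_def)
next
  case Lne: False
  define U where "U = (\<Union>i<t. (\<lambda>l. l ^ (S div m i)) ` L)"
  have finU: "finite U" unfolding U_def using assms(2) by auto
  have Une: "U \<noteq> {}" unfolding U_def using assms(1) Lne by auto
  have Spos: "S > 0"
  proof -
    have "0 \<notin> m ` {..<t}" using assms(4) by auto
    then have "Lcm (m ` {..<t}) \<noteq> 0" using Lcm_0_iff[of "m ` {..<t}"] by auto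
    then show ?thesis unfolding assms(5) by linarith
  qed
  have Sm: "S = m i * (S div m i)" if "i < t" for i
  proof -
    have "m i dvd S" unfolding assms(5) using that by (intro dvd_Lcm) auto
    then show ?thesis by simp
  qed
  define Q where "Q i N = (\<Prod>l\<in>L. (1 - fps_const (l ^ (S div m i)) * fps_X ^ S) ^ N)" for i N
  have "\<forall>i. \<exists>N. i < t \<longrightarrow> ispoly ((Abs_fps (g i) oo fps_X ^ m i) * Q i N)"
  proof
    fix i
    show "\<exists>N. i < t \<longrightarrow> ispoly ((Abs_fps (g i) oo fps_X ^ m i) * Q i N)"
    proof (cases "i < t")
      case True
      have "polyexp L (g i)" "0 < m i" using assms(3,4) True by auto
      from step3[OF this Sm[OF True]] obtain N where
        "ispoly ((Abs_fps (g i) oo fps_X ^ m i) * (\<Prod>l\<in>L. (1 - fps_const (l ^ (S div m i)) * fps_X ^ S) ^ N))"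
        by blast
      then show ?thesis unfolding Q_def by blast
    qed simp
  qed
  then obtain N where N: "\<And>i. i < t \<Longrightarrow> ispoly ((Abs_fps (g i) oo fps_X ^ m i) * Q i (N i))"
    by metis
  define I where "I = Sigma {..<t} (\<lambda>i. L \<times> {..<N i})"
  define \<beta> where "\<beta> x = (case x of (i, l, n) \<Rightarrow> l ^ (S div m i))" for x :: "nat \<times> complex \<times> nat"
  have finI: "finite I" unfolding I_def using assms(2) by auto
  have bI: "\<beta> ` I \<subseteq> U" unfolding I_def U_def \<beta>_def by auto
  have prodI: "(\<Prod>x\<in>I. 1 - fps_const (\<beta> x) * fps_X ^ S) = (\<Prod>i<t. Q i (N i))"
  proof -
    have "(\<Prod>x\<in>I. 1 - fps_const (\<beta> x) * fps_X ^ S)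
        = (\<Prod>i<t. \<Prod>y\<in>L \<times> {..<N i}. 1 - fps_const (\<beta> (i, y)) * fps_X ^ S)"
      unfolding I_def using assms(2) by (subst prod.Sigma) auto
    also have "\<dots> = (\<Prod>i<t. Q i (N i))"
    proof (intro prod.cong refl)
      fix i
      have "(\<Prod>y\<in>L \<times> {..<N i}. 1 - fps_const (\<beta> (i, y)) * fps_X ^ S)
          = (\<Prod>l\<in>L. \<Prod>n\<in>{..<N i}. 1 - fps_const (\<beta> (i, l, n)) * fps_X ^ S)"
        by (simp add: prod.cartesian_product)
      also have "\<dots> = Q i (N i)" unfolding Q_def \<beta>_def by simp
      finally show "(\<Prod>y\<in>L \<times> {..<N i}. 1 - fps_const (\<beta> (i, y)) * fps_X ^ S) = Q i (N i)" .
    qed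
    finally show ?thesis .
  qed
  have "Abs_fps (wconv t g m) * (\<Prod>x\<in>I. 1 - fps_const (\<beta> x) * fps_X ^ S)
      = (\<Prod>i<t. (Abs_fps (g i) oo fps_X ^ m i) * Q i (N i))"
    unfolding prodI step2[OF assms(4)] by (simp add: prod.distrib)
  also have "ispoly \<dots>" by (intro ispoly_prod N) simp
  finally have "ispoly (Abs_fps (wconv t g m) * (\<Prod>x\<in>I. 1 - fps_const (\<beta> x) * fps_X ^ S))" .
  then have "evform S U (\<lambda>k. Abs_fps (wconv t g m) $ k)"
    by (rule step5[OF finI Spos finU bI])
  then have "evform S U (wconv t g m)" by simp
  then have "modS_polyexp S U (wconv t g m)" by (rule from_evform[OF finU Une])
  then show ?thesis unfolding U_def by blast
qed


end
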